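(* Let $R$ be a ring satisfying the ascending chain condition on left annihilators, let $\mathbb S=R[X^{\pm1};\boldsymbol\alpha]$ be a skew Laurent polynomial ring of bijective type, let $\mathcal T$ be a submonoid of the free abelian group $G_X$, and let $A=R[\mathcal T;\boldsymbol\alpha]=\bigoplus_{\tau\in\mathcal T}R\tau\subseteq\mathbb S$. If $R$ is prime, then $A$ is prime; if $R$ is semiprime, then $A$ is semiprime.
   Context: Skew Laurent polynomial ring of bijective type: $X$ is a set of commuting variables, $G_X$ is the free abelian group on $X$, and $\mathbb S=R[X^{\pm1};\boldsymbol\alpha]$ is the ring which is a free left $R$-module with basis $G_X$, terms multiplying as in $G_X$, and for each $x\in X$ a ring automorphism $\alpha_x$ of $R$ with $xa=\alpha_x(a)x$, $x^{-1}a=\alpha_x^{-1}(a)x^{-1}$ for $a\in R$. *)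

theory Defs
  imports Main "HOL-Library.Poly_Mapping"
begin

definition ring_aut :: "('a::ring_1 \<Rightarrow> 'a) \<Rightarrow> bool" where
  "ring_aut f \<longleftrightarrow> bij f \<and> (\<forall>a b. f (a + b) = f a + f b) \<and> (\<forall>a b. f (a * b) = f a * f b) \<and> f 1 = 1"

definition left_ann :: "'a::ring_1 set \<Rightarrow> 'a set" where
  "left_ann S = {r. \<forall>s\<in>S. r * s = 0}"

definition acc_left_ann :: "'a::ring_1 itself \<Rightarrow> bool" where
  "acc_left_ann _ \<longleftrightarrow>
     (\<forall>C :: nat \<Rightarrow> 'a set. (\<forall>n. \<exists>S. C n = left_ann S) \<and> (\<forall>n. C n \<subseteq> C (Suc n))
        \<longrightarrow> (\<exists>N. \<forall>n\<ge>N. C n = C N))"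

definition prime_ring_on :: "'b set \<Rightarrow> ('b \<Rightarrow> 'b \<Rightarrow> 'b) \<Rightarrow> 'b \<Rightarrow> bool" where
  "prime_ring_on A mult z \<longleftrightarrow>
     (\<forall>a\<in>A. \<forall>b\<in>A. (\<forall>c\<in>A. mult (mult a c) b = z) \<longrightarrow> a = z \<or> b = z)"

definition semiprime_ring_on :: "'b set \<Rightarrow> ('b \<Rightarrow> 'b \<Rightarrow> 'b) \<Rightarrow> 'b \<Rightarrow> bool" where
  "semiprime_ring_on A mult z \<longleftrightarrow>
     (\<forall>a\<in>A. (\<forall>c\<in>A. mult (mult a c) a = z) \<longrightarrow> a = z)"

definition aut_pow :: "('a \<Rightarrow> 'a) \<Rightarrow> int \<Rightarrow> 'a \<Rightarrow> 'a" where
  "aut_pow f k = (if 0 \<le> k then f ^^ nat k else inv f ^^ nat (- k))"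

text \<open>The free abelian group G_X on X is the type of finitely supported maps x to int.  The action of
  g = \<Prod> x^(g x) on R:  alpha^g = composition of alpha_x^(g x) over the support
  (well defined as the alpha_x commute).\<close>
definition alpha_act :: "('x \<Rightarrow> 'a \<Rightarrow> 'a) \<Rightarrow> ('x \<Rightarrow>\<^sub>0 int) \<Rightarrow> 'a \<Rightarrow> 'a" where
  "alpha_act \<alpha> g = Finite_Set.fold (\<lambda>x f. aut_pow (\<alpha> x) (Poly_Mapping.lookup g x) \<circ> f) id (Poly_Mapping.keys g)"

text \<open>Multiplication in S = R[X^{\<pm>1}; alpha]: elements are finitely supported
  functions G_X \<rightarrow> R, and (a g)(b h) = a alpha^g(b) gh.\<close>
definition skew_mult :: "('x \<Rightarrow> 'a::ring_1 \<Rightarrow> 'a) \<Rightarrow> (('x \<Rightarrow>\<^sub>0 int) \<Rightarrow>\<^sub>0 'a)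
    \<Rightarrow> (('x \<Rightarrow>\<^sub>0 int) \<Rightarrow>\<^sub>0 'a) \<Rightarrow> (('x \<Rightarrow>\<^sub>0 int) \<Rightarrow>\<^sub>0 'a)" where
  "skew_mult \<alpha> p q = (\<Sum>g\<in>Poly_Mapping.keys p. \<Sum>h\<in>Poly_Mapping.keys q.
      Poly_Mapping.single (g + h) (Poly_Mapping.lookup p g * alpha_act \<alpha> g (Poly_Mapping.lookup q h)))"

definition skew_sub :: "('x \<Rightarrow>\<^sub>0 int) set \<Rightarrow> (('x \<Rightarrow>\<^sub>0 int) \<Rightarrow>\<^sub>0 'a::zero) set" where
  "skew_sub T = {p. Poly_Mapping.keys p \<subseteq> T}"

end

theory Submission
  imports Defs
begin



lemma ring_aut_0: "ring_aut f \<Longrightarrow> f 0 = 0"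
proof -
  assume a: "ring_aut f"
  have "f 0 = f 0 + f 0" using a by (metis add_0 ring_aut_def)
  thus ?thesis by simp
qed

lemma ring_aut_inj: "ring_aut f \<Longrightarrow> inj f"
  by (simp add: ring_aut_def bij_is_inj)

lemma ring_aut_surj: "ring_aut f \<Longrightarrow> surj f"
  by (simp add: ring_aut_def bij_is_surj)

lemma ring_aut_mult: "ring_aut f \<Longrightarrow> f (a * b) = f a * f b"
  by (simp add: ring_aut_def)

lemma ring_aut_id: "ring_aut id"
  by (simp add: ring_aut_def)

lemma ring_aut_comp: "ring_aut f \<Longrightarrow> ring_aut g \<Longrightarrow> ring_aut (f \<circ> g)"
  by (simp add: ring_aut_def bij_comp)

lemma ring_aut_inv: "ring_aut f \<Longrightarrow> ring_aut (inv f)"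
proof -
  assume a: "ring_aut f"
  hence b: "bij f" by (simp add: ring_aut_def)
  have fi: "\<And>x. f (inv f x) = x" using b by (simp add: bij_is_surj surj_f_inv_f)
  have if': "\<And>x. inv f (f x) = x" using b by (simp add: bij_is_inj)
  have "inv f (a + b) = inv f a + inv f b" for a b
  proof -
    have "f (inv f a + inv f b) = a + b" using a fi by (simp add: ring_aut_def)
    hence "inv f (a + b) = inv f (f (inv f a + inv f b))" by simp
    thus ?thesis using if' by simp
  qed
  moreover have "inv f (a * b) = inv f a * inv f b" for a b
  proof -
    have "f (inv f a * inv f b) = a * b" using a fi by (simp add: ring_aut_def)
    hence "inv f (a * b) = inv f (f (inv f a * inv f b))" by simp
    thus ?thesis using if' by simp
  qed
  moreover have "inv f 1 = 1" using a if' by (metis ring_aut_def)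
  ultimately show ?thesis using b by (simp add: ring_aut_def bij_imp_bij_inv)
qed

lemma ring_aut_funpow: "ring_aut f \<Longrightarrow> ring_aut (f ^^ n)"
  by (induction n) (auto simp: ring_aut_id ring_aut_comp)

lemma ring_aut_aut_pow: "ring_aut f \<Longrightarrow> ring_aut (aut_pow f k)"
  by (simp add: aut_pow_def ring_aut_funpow ring_aut_inv)

lemma aut_pow_0 [simp]: "aut_pow f 0 = id"
  by (simp add: aut_pow_def)

lemma aut_pow_plus1:
  assumes "bij f" shows "aut_pow f (k + 1) = f \<circ> aut_pow f k"
proof (cases "0 \<le> k")
  case True
  then have "nat (k + 1) = Suc (nat k)" by simp
  then show ?thesis using True by (simp add: aut_pow_def)
next
  case False
  define m where "m = nat (-(k+1))"
  have m: "nat (- k) = Suc m" "nat (-(k+1)) = m" using False by (simp_all add: m_def)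
  have fi: "f \<circ> inv f = id" using assms bij_is_surj surj_iff by blast
  show ?thesis using False m
    by (auto simp: aut_pow_def comp_assoc[symmetric] fi)
qed

lemma aut_pow_minus1:
  assumes "bij f" shows "aut_pow f (k - 1) = inv f \<circ> aut_pow f k"
proof -
  have fi: "inv f \<circ> f = id" using assms bij_is_inj inv_o_cancel by blast
  have "aut_pow f k = f \<circ> aut_pow f (k - 1)" using aut_pow_plus1[OF assms, of "k-1"] by simp
  hence "inv f \<circ> aut_pow f k = aut_pow f (k - 1)" by (simp add: comp_assoc[symmetric] fi)
  thus ?thesis by simp
qed

lemma aut_pow_add:
  assumes "bij f" shows "aut_pow f (k + l) = aut_pow f l \<circ> aut_pow f k"
proof (induction l rule: int_induct[where k = 0])
  case base then show ?case by simp
next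
  case (step1 i)
  have "aut_pow f (k + (i + 1)) = f \<circ> aut_pow f (k + i)"
    using aut_pow_plus1[OF assms, of "k+i"] by (simp add: add.assoc)
  also have "\<dots> = aut_pow f (i + 1) \<circ> aut_pow f k"
    using step1 aut_pow_plus1[OF assms, of i] by (simp add: fun_eq_iff)
  finally show ?case .
next
  case (step2 i)
  have "aut_pow f (k + (i - 1)) = inv f \<circ> aut_pow f (k + i)"
    using aut_pow_minus1[OF assms, of "k+i"] by (simp add: algebra_simps)
  also have "\<dots> = aut_pow f (i - 1) \<circ> aut_pow f k"
    using step2 aut_pow_minus1[OF assms, of i] by (simp add: fun_eq_iff)
  finally show ?case .
qed

lemma comm_inv:
  assumes "bij f" "f \<circ> g = g \<circ> f" shows "inv f \<circ> g = g \<circ> inv f"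
proof -
  have fi: "f \<circ> inv f = id" using assms bij_is_surj surj_iff by blast
  have if': "inv f \<circ> f = id" using assms bij_is_inj inv_o_cancel by blast
  have "inv f \<circ> g = inv f \<circ> g \<circ> (f \<circ> inv f)" by (simp add: fi)
  also have "\<dots> = inv f \<circ> (f \<circ> g) \<circ> inv f" using assms(2) by (simp add: comp_assoc)
  also have "\<dots> = g \<circ> inv f" by (simp add: comp_assoc[symmetric] if')
  finally show ?thesis .
qed

lemma comm_funpow:
  assumes "f \<circ> g = g \<circ> f" shows "f ^^ n \<circ> g = g \<circ> f ^^ n"
proof (induction n)
  case 0 then show ?case by simp
next
  case (Suc n)
  have "f ^^ Suc n \<circ> g = f \<circ> (f ^^ n \<circ> g)" by (simp add: comp_assoc)
  also have "\<dots> = (f \<circ> g) \<circ> f ^^ n" using Suc by (simp add: fun_eq_iff)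
  also have "\<dots> = g \<circ> f ^^ Suc n" using assms by (simp add: comp_assoc)
  finally show ?case .
qed

lemma comm_aut_pow1:
  assumes "bij f" "f \<circ> g = g \<circ> f" shows "aut_pow f k \<circ> g = g \<circ> aut_pow f k"
  using comm_funpow[OF assms(2)] comm_funpow[OF comm_inv[OF assms]]
  by (simp add: aut_pow_def)

lemma comm_aut_pow:
  assumes "bij f" "bij g" "f \<circ> g = g \<circ> f" shows "aut_pow f k \<circ> aut_pow g l = aut_pow g l \<circ> aut_pow f k"
proof -
  have "aut_pow f k \<circ> g = g \<circ> aut_pow f k" by (rule comm_aut_pow1[OF assms(1) assms(3)])
  hence "g \<circ> aut_pow f k = aut_pow f k \<circ> g" by simp
  from comm_aut_pow1[OF assms(2) this] show ?thesis by simp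
qed




definition cf :: "('x \<Rightarrow> 'a \<Rightarrow> 'a) \<Rightarrow> ('x \<Rightarrow>\<^sub>0 int) \<Rightarrow> 'x \<Rightarrow> ('a \<Rightarrow> 'a) \<Rightarrow> ('a \<Rightarrow> 'a)" where
  "cf \<alpha> g = (\<lambda>x f. aut_pow (\<alpha> x) (Poly_Mapping.lookup g x) \<circ> f)"

definition PP :: "('x \<Rightarrow> 'a \<Rightarrow> 'a) \<Rightarrow> ('x \<Rightarrow>\<^sub>0 int) \<Rightarrow> 'x set \<Rightarrow> ('a \<Rightarrow> 'a)" where
  "PP \<alpha> g K = Finite_Set.fold (cf \<alpha> g) id K"

locale autfam =
  fixes \<alpha> :: "'x \<Rightarrow> 'a::ring_1 \<Rightarrow> 'a"
  assumes aut: "\<And>x. ring_aut (\<alpha> x)"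
    and comm: "\<And>x y. \<alpha> x \<circ> \<alpha> y = \<alpha> y \<circ> \<alpha> x"
begin

lemma bijx: "bij (\<alpha> x)" using aut by (simp add: ring_aut_def)

lemma cpow: "aut_pow (\<alpha> x) k \<circ> aut_pow (\<alpha> y) l = aut_pow (\<alpha> y) l \<circ> aut_pow (\<alpha> x) k"
  by (rule comm_aut_pow[OF bijx bijx comm])

lemma cpow': "aut_pow (\<alpha> x) k (aut_pow (\<alpha> y) l a) = aut_pow (\<alpha> y) l (aut_pow (\<alpha> x) k a)"
  using cpow[of x k y l] by (simp add: fun_eq_iff)

lemma cfc: "comp_fun_commute_on UNIV (cf \<alpha> g)"
proof
  fix x y
  show "cf \<alpha> g y \<circ> cf \<alpha> g x = cf \<alpha> g x \<circ> cf \<alpha> g y"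
    using cpow[of y "Poly_Mapping.lookup g y" x "Poly_Mapping.lookup g x"]
    by (simp add: cf_def fun_eq_iff o_assoc[symmetric])
qed

lemma PP_empty [simp]: "PP \<alpha> g {} = id"
  by (simp add: PP_def)

lemma PP_insert: "finite K \<Longrightarrow> x \<notin> K \<Longrightarrow>
   PP \<alpha> g (insert x K) = aut_pow (\<alpha> x) (Poly_Mapping.lookup g x) \<circ> PP \<alpha> g K"
  unfolding PP_def using comp_fun_commute_on.fold_insert[OF cfc, of x K g "id"]
  by (simp add: cf_def)

lemma PP_comm: "finite K \<Longrightarrow> aut_pow (\<alpha> y) l (PP \<alpha> g K a) = PP \<alpha> g K (aut_pow (\<alpha> y) l a)"
proof (induction K arbitrary: a rule: finite_induct)
  case empty then show ?case by simp
next
  case (insert x F)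
  show ?case using insert by (simp add: PP_insert cpow')
qed

lemma PP_add: "finite K \<Longrightarrow> PP \<alpha> (g + h) K a = PP \<alpha> g K (PP \<alpha> h K a)"
proof (induction K arbitrary: a rule: finite_induct)
  case empty then show ?case by simp
next
  case (insert x F)
  have e: "aut_pow (\<alpha> x) (Poly_Mapping.lookup g x + Poly_Mapping.lookup h x) b =
    aut_pow (\<alpha> x) (Poly_Mapping.lookup g x) (aut_pow (\<alpha> x) (Poly_Mapping.lookup h x) b)" for b
    using aut_pow_add[OF bijx[of x], of "Poly_Mapping.lookup h x" "Poly_Mapping.lookup g x"]
    by (simp add: add.commute fun_eq_iff)
  show ?case using insert by (simp add: PP_insert lookup_add e PP_comm)
qed

lemma PP_extend: "finite J \<Longrightarrow> finite K \<Longrightarrow> (\<forall>x\<in>J. Poly_Mapping.lookup g x = 0) \<Longrightarrow> PP \<alpha> g (K \<union> J) = PP \<alpha> g K"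
proof (induction J rule: finite_induct)
  case empty then show ?case by simp
next
  case (insert x F)
  show ?case
  proof (cases "x \<in> K \<union> F")
    case True
    then have "K \<union> insert x F = K \<union> F" by auto
    then show ?thesis using insert by simp
  next
    case False
    then have "PP \<alpha> g (K \<union> insert x F) = aut_pow (\<alpha> x) 0 \<circ> PP \<alpha> g (K \<union> F)"
      using insert PP_insert[of "K \<union> F" x g] by simp
    then show ?thesis using insert by simp
  qed
qed

lemma alpha_act_PP: "finite K \<Longrightarrow> Poly_Mapping.keys g \<subseteq> K \<Longrightarrow> alpha_act \<alpha> g = PP \<alpha> g K"
proof -
  assume K: "finite K" "Poly_Mapping.keys g \<subseteq> K"
  have "K = Poly_Mapping.keys g \<union> (K - Poly_Mapping.keys g)" using K by auto
  hence "PP \<alpha> g K = PP \<alpha> g (Poly_Mapping.keys g \<union> (K - Poly_Mapping.keys g))" by simp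
  also have "\<dots> = PP \<alpha> g (Poly_Mapping.keys g)"
    using K by (intro PP_extend) (auto simp: in_keys_iff)
  finally show ?thesis by (simp add: alpha_act_def PP_def cf_def)
qed

lemma alpha_act_add: "alpha_act \<alpha> (g + h) = alpha_act \<alpha> g \<circ> alpha_act \<alpha> h"
proof -
  let ?K = "Poly_Mapping.keys g \<union> Poly_Mapping.keys h \<union> Poly_Mapping.keys (g + h)"
  have f: "finite ?K" by simp
  have e1: "alpha_act \<alpha> g = PP \<alpha> g ?K" by (rule alpha_act_PP[OF f]) auto
  have e2: "alpha_act \<alpha> h = PP \<alpha> h ?K" by (rule alpha_act_PP[OF f]) auto
  have e3: "alpha_act \<alpha> (g + h) = PP \<alpha> (g + h) ?K" by (rule alpha_act_PP[OF f]) auto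
  show ?thesis unfolding e1 e2 e3 using PP_add[OF f] by (simp add: fun_eq_iff)
qed

lemma PP_aut: "finite K \<Longrightarrow> ring_aut (PP \<alpha> g K)"
proof (induction K rule: finite_induct)
  case empty then show ?case by (simp only: PP_empty ring_aut_id)
next
  case (insert x F)
  then show ?case unfolding PP_insert[OF insert(1,2)]
    by (intro ring_aut_comp ring_aut_aut_pow aut)
qed

lemma alpha_act_aut: "ring_aut (alpha_act \<alpha> g)"
  using alpha_act_PP[of "Poly_Mapping.keys g" g] PP_aut[of "Poly_Mapping.keys g" g] by simp

lemma alpha_act_0: "alpha_act \<alpha> 0 = id"
  by (simp add: alpha_act_def)

end



locale gord =
  fixes lt :: "'g::ab_group_add \<Rightarrow> 'g \<Rightarrow> bool"
  assumes irr: "\<not> lt u u"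
    and trn: "lt u v \<Longrightarrow> lt v w \<Longrightarrow> lt u w"
    and tot: "u \<noteq> v \<Longrightarrow> lt u v \<or> lt v u"
    and addm: "lt u v \<Longrightarrow> lt (u + w) (v + w)"
begin

lemma addm2: "lt u v \<Longrightarrow> lt (w + u) (w + v)"
proof -
  assume "lt u v"
  then have "lt (u + w) (v + w)" by (rule addm)
  moreover have "u + w = w + u" "v + w = w + v" by (rule add.commute)+
  ultimately show ?thesis by simp
qed

lemma max_ex: "finite K \<Longrightarrow> K \<noteq> {} \<Longrightarrow> \<exists>m\<in>K. \<forall>k\<in>K. k = m \<or> lt k m"
proof (induction K rule: finite_ne_induct)
  case (singleton x) then show ?case by simp
next
  case (insert x F)
  from insert.IH obtain m where m: "m \<in> F" "\<forall>k\<in>F. k = m \<or> lt k m" by blast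
  show ?case
  proof (cases "lt m x")
    case True
    have "\<forall>k\<in>insert x F. k = x \<or> lt k x"
    proof
      fix k assume "k \<in> insert x F"
      then consider "k = x" | "k = m" | "lt k m" using m(2) by blast
      then show "k = x \<or> lt k x"
      proof cases
        case 1 then show ?thesis by simp
      next
        case 2 then show ?thesis using True by simp
      next
        case 3 then have "lt k x" using True by (rule trn)
        then show ?thesis by simp
      qed
    qed
    then show ?thesis by blast
  next
    case False
    have xm: "x = m \<or> lt x m"
    proof (cases "x = m")
      case True then show ?thesis by simp
    next
      case ne: False
      then have "lt x m \<or> lt m x" by (rule tot)
      then show ?thesis using False by simp
    qed
    have "\<forall>k\<in>insert x F. k = m \<or> lt k m" using m(2) xm by simp
    then show ?thesis using m(1) by blast
  qed
qed

lemma uniq_sum: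
  assumes "\<forall>k\<in>K1. k = m1 \<or> lt k m1" "\<forall>k\<in>K2. k = m2 \<or> lt k m2"
    and "g \<in> K1" "h \<in> K2" "g + h = m1 + m2"
  shows "g = m1 \<and> h = m2"
proof -
  have le2: "h = m2 \<or> lt h m2" using assms(2,4) by simp
  have le1: "g = m1 \<or> lt g m1" using assms(1,3) by simp
  have "g = m1"
  proof (rule ccontr)
    assume "g \<noteq> m1"
    then have "lt g m1" using le1 by blast
    then have a: "lt (g + h) (m1 + h)" by (rule addm)
    have "lt (g + h) (m1 + m2)"
    proof (cases "h = m2")
      case True then show ?thesis using a by simp
    next
      case False
      then have "lt h m2" using le2 by blast
      then have "lt (m1 + h) (m1 + m2)" by (rule addm2)
      then show ?thesis using a by (rule trn[rotated])
    qed
    then show False using assms(5) irr by simp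
  qed
  moreover then have "h = m2" using assms(5) by simp
  ultimately show ?thesis by simp
qed

end

lemma wo_facts:
  fixes r :: "'a rel"
  assumes r: "Well_order r" "Field r = UNIV"
  shows "trans r" "antisym r" "x \<noteq> y \<Longrightarrow> (x, y) \<in> r \<or> (y, x) \<in> r" "wf (r - Id)"
proof -
  have w: "well_order_on UNIV r" using r by simp
  then have lo: "linear_order_on UNIV r" and wf: "wf (r - Id)" unfolding well_order_on_def by blast+
  then have po: "partial_order_on UNIV r" and tot: "total_on UNIV r" unfolding linear_order_on_def by blast+
  then have "preorder_on UNIV r" and an: "antisym r" unfolding partial_order_on_def by blast+
  then have "trans r" unfolding preorder_on_def by blast
  show "trans r" by fact
  show "antisym r" by fact
  show "wf (r - Id)" by fact
  assume "x \<noteq> y" then show "(x, y) \<in> r \<or> (y, x) \<in> r" using tot unfolding total_on_def by blast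
qed

definition lexlt :: "('x \<times> 'x) set \<Rightarrow> ('x \<Rightarrow>\<^sub>0 int) \<Rightarrow> ('x \<Rightarrow>\<^sub>0 int) \<Rightarrow> bool" where
  "lexlt r u v \<longleftrightarrow> (\<exists>x. Poly_Mapping.lookup u x < Poly_Mapping.lookup v x \<and>
      (\<forall>y. (y, x) \<in> r \<and> y \<noteq> x \<longrightarrow> Poly_Mapping.lookup u y = Poly_Mapping.lookup v y))"

lemma lexlt_trans:
  assumes tr: "trans r" and an: "antisym r" and to: "\<And>x y. x \<noteq> y \<Longrightarrow> (x, y) \<in> r \<or> (y, x) \<in> r"
    and uv: "lexlt r u v" and vw: "lexlt r v w"
  shows "lexlt r u w"
proof -
  obtain x1 where x1: "Poly_Mapping.lookup u x1 < Poly_Mapping.lookup v x1"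
    "\<And>y. (y, x1) \<in> r \<Longrightarrow> y \<noteq> x1 \<Longrightarrow> Poly_Mapping.lookup u y = Poly_Mapping.lookup v y"
    using uv unfolding lexlt_def by blast
  obtain x2 where x2: "Poly_Mapping.lookup v x2 < Poly_Mapping.lookup w x2"
    "\<And>y. (y, x2) \<in> r \<Longrightarrow> y \<noteq> x2 \<Longrightarrow> Poly_Mapping.lookup v y = Poly_Mapping.lookup w y"
    using vw unfolding lexlt_def by blast
  have below: "(y, b) \<in> r \<and> y \<noteq> b" if "(y, a) \<in> r" "y \<noteq> a" "(a, b) \<in> r" "a \<noteq> b" for y a b
  proof
    show "(y, b) \<in> r" using tr that(1,3) unfolding trans_def by blast
    show "y \<noteq> b"
    proof
      assume "y = b"
      then have "(b, a) \<in> r" using that(1) by simp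
      then have "a = b" using an that(3) unfolding antisym_def by blast
      then show False using that(4) by simp
    qed
  qed
  show "lexlt r u w"
  proof (cases "x1 = x2")
    case True
    have "Poly_Mapping.lookup u x1 < Poly_Mapping.lookup w x1" using x1(1) x2(1) True by simp
    moreover have "\<forall>y. (y, x1) \<in> r \<and> y \<noteq> x1 \<longrightarrow> Poly_Mapping.lookup u y = Poly_Mapping.lookup w y"
    proof (intro allI impI)
      fix y assume y: "(y, x1) \<in> r \<and> y \<noteq> x1"
      then have "Poly_Mapping.lookup u y = Poly_Mapping.lookup v y" using x1(2) by blast
      also have "\<dots> = Poly_Mapping.lookup w y" using x2(2) y True by blast
      finally show "Poly_Mapping.lookup u y = Poly_Mapping.lookup w y" .
    qed
    ultimately show ?thesis unfolding lexlt_def by blast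
  next
    case False
    then have "(x1, x2) \<in> r \<or> (x2, x1) \<in> r" by (rule to)
    then show ?thesis
    proof
      assume 1: "(x1, x2) \<in> r"
      have "Poly_Mapping.lookup v x1 = Poly_Mapping.lookup w x1" using x2(2)[OF 1 False] .
      then have "Poly_Mapping.lookup u x1 < Poly_Mapping.lookup w x1" using x1(1) by simp
      moreover have "\<forall>y. (y, x1) \<in> r \<and> y \<noteq> x1 \<longrightarrow> Poly_Mapping.lookup u y = Poly_Mapping.lookup w y"
      proof (intro allI impI)
        fix y assume y: "(y, x1) \<in> r \<and> y \<noteq> x1"
        then have y2: "(y, x2) \<in> r \<and> y \<noteq> x2" using below[of y x1 x2] 1 False by blast
        have "Poly_Mapping.lookup u y = Poly_Mapping.lookup v y" using x1(2) y by blast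
        also have "\<dots> = Poly_Mapping.lookup w y" using x2(2) y2 by blast
        finally show "Poly_Mapping.lookup u y = Poly_Mapping.lookup w y" .
      qed
      ultimately show ?thesis unfolding lexlt_def by blast
    next
      assume 2: "(x2, x1) \<in> r"
      have F2: "x2 \<noteq> x1" using False by simp
      have "Poly_Mapping.lookup u x2 = Poly_Mapping.lookup v x2" using x1(2)[OF 2 F2] .
      then have "Poly_Mapping.lookup u x2 < Poly_Mapping.lookup w x2" using x2(1) by simp
      moreover have "\<forall>y. (y, x2) \<in> r \<and> y \<noteq> x2 \<longrightarrow> Poly_Mapping.lookup u y = Poly_Mapping.lookup w y"
      proof (intro allI impI)
        fix y assume y: "(y, x2) \<in> r \<and> y \<noteq> x2"
        then have y1: "(y, x1) \<in> r \<and> y \<noteq> x1" using below[of y x2 x1] 2 F2 by blast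
        have "Poly_Mapping.lookup u y = Poly_Mapping.lookup v y" using x1(2) y1 by blast
        also have "\<dots> = Poly_Mapping.lookup w y" using x2(2) y by blast
        finally show "Poly_Mapping.lookup u y = Poly_Mapping.lookup w y" .
      qed
      ultimately show ?thesis unfolding lexlt_def by blast
    qed
  qed
qed

lemma lexlt_tot:
  assumes wf: "wf (r - Id)" and ne: "u \<noteq> v"
  shows "lexlt r u v \<or> lexlt r v u"
proof -
  let ?D = "{x. Poly_Mapping.lookup u x \<noteq> Poly_Mapping.lookup v x}"
  have "\<exists>x0. x0 \<in> ?D"
  proof (rule ccontr)
    assume "\<not> (\<exists>x0. x0 \<in> ?D)"
    then have "\<And>k. Poly_Mapping.lookup u k = Poly_Mapping.lookup v k" by simp
    then have "u = v" by (rule poly_mapping_eqI)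
    then show False using ne by simp
  qed
  then obtain x0 where x0: "x0 \<in> ?D" by blast
  obtain z where z: "z \<in> ?D" and zmin: "\<And>y. (y, z) \<in> r - Id \<Longrightarrow> y \<notin> ?D"
    using wfE_min[OF wf x0] by blast
  have eq: "\<forall>y. (y, z) \<in> r \<and> y \<noteq> z \<longrightarrow> Poly_Mapping.lookup u y = Poly_Mapping.lookup v y"
  proof (intro allI impI)
    fix y assume "(y, z) \<in> r \<and> y \<noteq> z"
    then have "(y, z) \<in> r - Id" by simp
    then have "y \<notin> ?D" by (rule zmin)
    then show "Poly_Mapping.lookup u y = Poly_Mapping.lookup v y" by simp
  qed
  have eq2: "\<forall>y. (y, z) \<in> r \<and> y \<noteq> z \<longrightarrow> Poly_Mapping.lookup v y = Poly_Mapping.lookup u y"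
    using eq by simp
  from z have "Poly_Mapping.lookup u z < Poly_Mapping.lookup v z \<or> Poly_Mapping.lookup v z < Poly_Mapping.lookup u z"
    by auto
  then show ?thesis
  proof
    assume "Poly_Mapping.lookup u z < Poly_Mapping.lookup v z"
    then have "lexlt r u v" unfolding lexlt_def using eq by blast
    then show ?thesis by simp
  next
    assume "Poly_Mapping.lookup v z < Poly_Mapping.lookup u z"
    then have "lexlt r v u" unfolding lexlt_def using eq2 by blast
    then show ?thesis by simp
  qed
qed

lemma lexlt_add: "lexlt r u v \<Longrightarrow> lexlt r (u + w) (v + w)"
  unfolding lexlt_def by (simp add: lookup_add)

lemma lexlt_irr: "\<not> lexlt r u u"
  unfolding lexlt_def by simp

lemma gord_ex: "\<exists>lt :: ('x \<Rightarrow>\<^sub>0 int) \<Rightarrow> ('x \<Rightarrow>\<^sub>0 int) \<Rightarrow> bool. gord lt"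
proof -
  obtain r :: "'x rel" where r: "Well_order r" "Field r = UNIV"
    using well_ordering[where 'a = 'x] by (elim exE conjE)
  have f1: "trans r" by (rule wo_facts(1)[OF r])
  have f2: "antisym r" by (rule wo_facts(2)[OF r])
  have f3: "\<And>x y. x \<noteq> y \<Longrightarrow> (x, y) \<in> r \<or> (y, x) \<in> r" by (rule wo_facts(3)[OF r])
  have f4: "wf (r - Id)" by (rule wo_facts(4)[OF r])
  have g: "gord (lexlt r)"
    apply (rule gord.intro)
    subgoal by (rule lexlt_irr)
    subgoal premises p by (rule lexlt_trans[OF f1 f2 f3 p(1) p(2)])
    subgoal premises p by (rule lexlt_tot[OF f4 p])
    subgoal premises p by (rule lexlt_add[OF p])
    done
  show ?thesis by (rule exI[of _ "lexlt r"]) (rule g)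
qed




lemma lookup_skew: "Poly_Mapping.lookup (skew_mult \<alpha> p q) k =
  (\<Sum>g\<in>Poly_Mapping.keys p. \<Sum>h\<in>Poly_Mapping.keys q.
     (if g + h = k then Poly_Mapping.lookup p g * alpha_act \<alpha> g (Poly_Mapping.lookup q h) else 0))"
  by (simp add: skew_mult_def lookup_sum lookup_single when_def)

lemma keys_skew: "k \<in> Poly_Mapping.keys (skew_mult \<alpha> p q) \<Longrightarrow>
   \<exists>g\<in>Poly_Mapping.keys p. \<exists>h\<in>Poly_Mapping.keys q. g + h = k"
proof -
  assume "k \<in> Poly_Mapping.keys (skew_mult \<alpha> p q)"
  then have "Poly_Mapping.lookup (skew_mult \<alpha> p q) k \<noteq> 0" by (simp add: in_keys_iff)
  then have "(\<Sum>g\<in>Poly_Mapping.keys p. \<Sum>h\<in>Poly_Mapping.keys q.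
     (if g + h = k then Poly_Mapping.lookup p g * alpha_act \<alpha> g (Poly_Mapping.lookup q h) else 0)) \<noteq> 0"
    unfolding lookup_skew .
  then obtain g where g: "g \<in> Poly_Mapping.keys p" and s2:
    "(\<Sum>h\<in>Poly_Mapping.keys q. (if g + h = k then Poly_Mapping.lookup p g * alpha_act \<alpha> g (Poly_Mapping.lookup q h) else 0)) \<noteq> 0"
    by (rule sum.not_neutral_contains_not_neutral)
  from s2 obtain h where h: "h \<in> Poly_Mapping.keys q" and s3: "(if g + h = k then Poly_Mapping.lookup p g * alpha_act \<alpha> g (Poly_Mapping.lookup q h) else 0) \<noteq> 0"
    by (rule sum.not_neutral_contains_not_neutral)
  have "g + h = k"
  proof (rule ccontr)
    assume "g + h \<noteq> k"
    then have "(if g + h = k then Poly_Mapping.lookup p g * alpha_act \<alpha> g (Poly_Mapping.lookup q h) else 0) = 0"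
      by (simp only: if_False)
    then show False using s3 by (simp only:)
  qed
  then show ?thesis using g h by blast
qed

context autfam
begin

lemma act0: "alpha_act \<alpha> g 0 = 0"
  by (rule ring_aut_0[OF alpha_act_aut])

lemma lookup_skew_gen:
  assumes "finite G" "Poly_Mapping.keys p \<subseteq> G" "finite H" "Poly_Mapping.keys q \<subseteq> H"
  shows "Poly_Mapping.lookup (skew_mult \<alpha> p q) k =
  (\<Sum>g\<in>G. \<Sum>h\<in>H.
     (if g + h = k then Poly_Mapping.lookup p g * alpha_act \<alpha> g (Poly_Mapping.lookup q h) else 0))"
proof -
  have "Poly_Mapping.lookup (skew_mult \<alpha> p q) k = (\<Sum>g\<in>Poly_Mapping.keys p. \<Sum>h\<in>H.
     (if g + h = k then Poly_Mapping.lookup p g * alpha_act \<alpha> g (Poly_Mapping.lookup q h) else 0))"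
    unfolding lookup_skew
  proof (rule sum.cong[OF refl])
    fix g
    show "(\<Sum>h\<in>Poly_Mapping.keys q. (if g + h = k then Poly_Mapping.lookup p g * alpha_act \<alpha> g (Poly_Mapping.lookup q h) else 0)) =
      (\<Sum>h\<in>H. (if g + h = k then Poly_Mapping.lookup p g * alpha_act \<alpha> g (Poly_Mapping.lookup q h) else 0))"
    proof (rule sum.mono_neutral_left[OF assms(3,4)], intro ballI)
      fix i assume "i \<in> H - Poly_Mapping.keys q"
      then have "i \<notin> Poly_Mapping.keys q" by simp
      then have z: "Poly_Mapping.lookup q i = 0" by (rule not_in_keys_iff_lookup_eq_zero[THEN iffD1])
      show "(if g + i = k then Poly_Mapping.lookup p g * alpha_act \<alpha> g (Poly_Mapping.lookup q i) else 0) = 0"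
        unfolding z act0 by (simp only: mult_zero_right if_cancel)
    qed
  qed
  also have "\<dots> = (\<Sum>g\<in>G. \<Sum>h\<in>H.
     (if g + h = k then Poly_Mapping.lookup p g * alpha_act \<alpha> g (Poly_Mapping.lookup q h) else 0))"
  proof (rule sum.mono_neutral_left[OF assms(1,2)], intro ballI)
    fix i assume "i \<in> G - Poly_Mapping.keys p"
    then have "i \<notin> Poly_Mapping.keys p" by simp
      then have z: "Poly_Mapping.lookup p i = 0" by (rule not_in_keys_iff_lookup_eq_zero[THEN iffD1])
    show "(\<Sum>h\<in>H. (if i + h = k then Poly_Mapping.lookup p i * alpha_act \<alpha> i (Poly_Mapping.lookup q h) else 0)) = 0"
      unfolding z by (rule sum.neutral, intro ballI) (simp only: mult_zero_left if_cancel)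
  qed
  finally show ?thesis .
qed

end

locale both = autfam \<alpha> + gord lt for \<alpha> :: "'x \<Rightarrow> 'a::ring_1 \<Rightarrow> 'a" and lt :: "('x \<Rightarrow>\<^sub>0 int) \<Rightarrow> ('x \<Rightarrow>\<^sub>0 int) \<Rightarrow> bool"
begin

lemma lead:
  assumes "finite G" "Poly_Mapping.keys p \<subseteq> G" "finite H" "Poly_Mapping.keys q \<subseteq> H"
    and "mp \<in> G" "mq \<in> H" "\<forall>g\<in>G. g = mp \<or> lt g mp" "\<forall>h\<in>H. h = mq \<or> lt h mq"
  shows "Poly_Mapping.lookup (skew_mult \<alpha> p q) (mp + mq) =
     Poly_Mapping.lookup p mp * alpha_act \<alpha> mp (Poly_Mapping.lookup q mq)"
proof -
  let ?X = "Poly_Mapping.lookup p mp * alpha_act \<alpha> mp (Poly_Mapping.lookup q mq)"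
  have "Poly_Mapping.lookup (skew_mult \<alpha> p q) (mp + mq) =
    (\<Sum>g\<in>G. \<Sum>h\<in>H. (if g = mp then (if h = mq then ?X else 0) else 0))"
    unfolding lookup_skew_gen[OF assms(1-4)]
  proof (rule sum.cong[OF refl], rule sum.cong[OF refl])
    fix g h assume gh: "g \<in> G" "h \<in> H"
    show "(if g + h = mp + mq then Poly_Mapping.lookup p g * alpha_act \<alpha> g (Poly_Mapping.lookup q h) else 0) =
      (if g = mp then (if h = mq then ?X else 0) else 0)"
    proof (cases "g + h = mp + mq")
      case True
      then have "g = mp \<and> h = mq" by (rule uniq_sum[OF assms(7,8) gh])
      then have e: "g = mp" "h = mq" by simp_all
      show ?thesis unfolding e by simp
    next
      case False
      have l: "(if g + h = mp + mq then Poly_Mapping.lookup p g * alpha_act \<alpha> g (Poly_Mapping.lookup q h) else 0) = 0"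
        by (rule if_not_P[OF False])
      have r: "(if g = mp then (if h = mq then ?X else 0) else 0) = 0"
      proof (cases "g = mp")
        case True
        then have nh: "h \<noteq> mq" using False by blast
        show ?thesis by (simp only: if_P[OF True] if_not_P[OF nh])
      next
        case False
        show ?thesis by (rule if_not_P[OF False])
      qed
      show ?thesis unfolding l r ..
    qed
  qed
  also have "\<dots> = (\<Sum>g\<in>G. (if g = mp then ?X else 0))"
  proof (rule sum.cong[OF refl])
    fix g show "(\<Sum>h\<in>H. (if g = mp then (if h = mq then ?X else 0) else 0)) = (if g = mp then ?X else 0)"
      using assms(3,6) by (cases "g = mp") simp_all
  qed
  also have "\<dots> = ?X" using assms(1,5) by simp
  finally show ?thesis .
qed

end



lemma left_ann_anti: "S \<subseteq> S' \<Longrightarrow> left_ann S' \<subseteq> left_ann S"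
  by (auto simp: left_ann_def)

lemma semiprime_acc:
  fixes a :: "'a::ring_1" and \<sigma> :: "'a \<Rightarrow> 'a"
  assumes acc: "acc_left_ann TYPE('a)" and sp: "semiprime_ring_on (UNIV :: 'a set) (*) 0"
    and \<sigma>: "ring_aut \<sigma>" and h: "\<And>k s. k \<ge> 1 \<Longrightarrow> a * s * (\<sigma> ^^ k) a = 0"
  shows "a = 0"
proof -
  define Sset where "Sset n = {s * (\<sigma> ^^ k) a | s k. k \<ge> n}" for n
  define C where "C n = left_ann (Sset n)" for n
  have sub: "Sset (Suc n) \<subseteq> Sset n" for n
  proof
    fix y assume "y \<in> Sset (Suc n)"
    then obtain s k where y: "y = s * (\<sigma> ^^ k) a" "Suc n \<le> k" unfolding Sset_def by blast
    then have "n \<le> k" by simp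
    then show "y \<in> Sset n" unfolding Sset_def using y(1) by blast
  qed
  have ch: "C n \<subseteq> C (Suc n)" for n
    unfolding C_def by (rule left_ann_anti[OF sub])
  have c1: "\<forall>n. \<exists>S. C n = left_ann S" unfolding C_def by blast
  have c2: "\<forall>n. C n \<subseteq> C (Suc n)" using ch by blast
  note impl = acc[unfolded acc_left_ann_def, THEN spec[where x = C]]
  have "\<exists>N. \<forall>n\<ge>N. C n = C N" using impl c1 c2 by blast
  then obtain N where N: "\<forall>n\<ge>N. C n = C N" by blast
  define b where "b = (\<sigma> ^^ N) a"
  have auN: "ring_aut (\<sigma> ^^ N)" by (rule ring_aut_funpow[OF \<sigma>])
  have "b * c \<in> C (Suc N)" for c
    unfolding C_def left_ann_def
  proof (intro CollectI ballI)
    fix y assume "y \<in> Sset (Suc N)"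
    then obtain s k where y: "y = s * (\<sigma> ^^ k) a" "k \<ge> Suc N" by (auto simp: Sset_def)
    have "\<exists>u. c * s = (\<sigma> ^^ N) u" by (rule surjD[OF ring_aut_surj[OF auN]])
    then obtain u where u0: "c * s = (\<sigma> ^^ N) u" by blast
    note u = u0[symmetric]
    define m where "m = k - N"
    have km: "k = N + m" "m \<ge> 1" using y(2) by (auto simp: m_def)
    have "(\<sigma> ^^ k) a = (\<sigma> ^^ N) ((\<sigma> ^^ m) a)" by (simp add: km funpow_add)
    then have "b * c * y = (\<sigma> ^^ N) (a * u * (\<sigma> ^^ m) a)"
      using u by (simp add: y b_def ring_aut_mult[OF auN] mult.assoc)
    also have "\<dots> = 0" using h[OF km(2)] ring_aut_0[OF auN] by simp
    finally show "b * c * y = 0" .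
  qed
  note bcS = this
  have CN: "C (Suc N) = C N" by (rule N[rule_format]) simp
  have bc: "b * c \<in> C N" for c using bcS[of c] unfolding CN .
  have "b \<in> Sset N" unfolding Sset_def b_def by (rule CollectI, rule exI[of _ 1], rule exI[of _ N], simp)
  then have "b * c * b = 0" for c using bc[of c] by (auto simp: C_def left_ann_def)
  then have "b = 0" using sp unfolding semiprime_ring_on_def by blast
  then have "(\<sigma> ^^ N) a = (\<sigma> ^^ N) 0" using ring_aut_0[OF auN] by (simp add: b_def)
  then show "a = 0" by (rule injD[OF ring_aut_inj[OF auN]])
qed

context both
begin

lemma key:
  assumes "f \<noteq> 0" "q \<noteq> 0"
    and mf: "mf \<in> Poly_Mapping.keys f" "\<forall>k\<in>Poly_Mapping.keys f. k = mf \<or> lt k mf"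
    and mq: "mq \<in> Poly_Mapping.keys q" "\<forall>k\<in>Poly_Mapping.keys q. k = mq \<or> lt k mq"
  shows "Poly_Mapping.lookup (skew_mult \<alpha> (skew_mult \<alpha> f (Poly_Mapping.single t r)) q) (mf + t + mq) =
     Poly_Mapping.lookup f mf * alpha_act \<alpha> mf r * alpha_act \<alpha> (mf + t) (Poly_Mapping.lookup q mq)"
proof -
  let ?c = "Poly_Mapping.single t r"
  let ?fc = "skew_mult \<alpha> f ?c"
  have kc: "Poly_Mapping.keys ?c \<subseteq> {t}" by simp
  have l1: "Poly_Mapping.lookup ?fc (mf + t) = Poly_Mapping.lookup f mf * alpha_act \<alpha> mf r"
    using lead[of "Poly_Mapping.keys f" f "{t}" ?c mf t] mf kc by simp
  let ?G = "(\<lambda>g. g + t) ` Poly_Mapping.keys f"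
  have kfc: "Poly_Mapping.keys ?fc \<subseteq> ?G"
  proof
    fix k assume "k \<in> Poly_Mapping.keys ?fc"
    then obtain g h where "g \<in> Poly_Mapping.keys f" "h \<in> Poly_Mapping.keys ?c" "g + h = k"
      using keys_skew by blast
    then show "k \<in> ?G" using kc by auto
  qed
  have gle: "\<forall>k\<in>?G. k = mf + t \<or> lt k (mf + t)" using mf(2) addm by auto
  have "Poly_Mapping.lookup (skew_mult \<alpha> ?fc q) (mf + t + mq) =
     Poly_Mapping.lookup ?fc (mf + t) * alpha_act \<alpha> (mf + t) (Poly_Mapping.lookup q mq)"
    by (rule lead) (use kfc gle mf(1) mq in auto)
  then show ?thesis using l1 by simp
qed

end

theorem mainTheorem6:
  fixes \<alpha> :: "'x \<Rightarrow> 'a::ring_1 \<Rightarrow> 'a"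
    and T :: "('x \<Rightarrow>\<^sub>0 int) set"
  assumes acc: "acc_left_ann TYPE('a)"
    and aut: "\<And>x. ring_aut (\<alpha> x)"
    and comm: "\<And>x y. \<alpha> x \<circ> \<alpha> y = \<alpha> y \<circ> \<alpha> x"
    and T0: "0 \<in> T"
    and Tadd: "\<And>s t. s \<in> T \<Longrightarrow> t \<in> T \<Longrightarrow> s + t \<in> T"
  shows "(prime_ring_on (UNIV :: 'a set) (*) 0
            \<longrightarrow> prime_ring_on (skew_sub T) (skew_mult \<alpha>) 0)
       \<and> (semiprime_ring_on (UNIV :: 'a set) (*) 0
            \<longrightarrow> semiprime_ring_on (skew_sub T) (skew_mult \<alpha>) 0)"
proof -
  obtain lt :: "('x \<Rightarrow>\<^sub>0 int) \<Rightarrow> ('x \<Rightarrow>\<^sub>0 int) \<Rightarrow> bool" where glt: "gord lt" using gord_ex by blast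
  interpret both \<alpha> lt
    by (intro both.intro autfam.intro glt) (use aut comm in auto)
  have maxk: "\<exists>m\<in>Poly_Mapping.keys f. \<forall>k\<in>Poly_Mapping.keys f. k = m \<or> lt k m" if "f \<noteq> 0" for f :: "('x \<Rightarrow>\<^sub>0 int) \<Rightarrow>\<^sub>0 'a"
    using max_ex[of "Poly_Mapping.keys f"] that by simp
  have csub: "Poly_Mapping.single t r \<in> skew_sub T" if "t \<in> T" for t r
    using that by (simp add: skew_sub_def)
  have inv_ex: "\<exists>r. alpha_act \<alpha> g r = s" for g s
  proof -
    have "\<exists>r. s = alpha_act \<alpha> g r" by (rule surjD[OF ring_aut_surj[OF alpha_act_aut]])
    then show ?thesis by (elim exE) (rule exI, erule sym)
  qed
  show ?thesis
  proof (intro conjI impI)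
    assume pr: "prime_ring_on (UNIV :: 'a set) (*) 0"
    show "prime_ring_on (skew_sub T) (skew_mult \<alpha>) 0"
      unfolding prime_ring_on_def
    proof (intro ballI impI)
      fix f q assume f: "f \<in> skew_sub T" and q: "q \<in> skew_sub T"
        and h: "\<forall>c\<in>skew_sub T. skew_mult \<alpha> (skew_mult \<alpha> f c) q = 0"
      show "f = 0 \<or> q = 0"
      proof (rule ccontr)
        assume "\<not> (f = 0 \<or> q = 0)"
        then have nz: "f \<noteq> 0" "q \<noteq> 0" by auto
        obtain mf where mf: "mf \<in> Poly_Mapping.keys f" "\<forall>k\<in>Poly_Mapping.keys f. k = mf \<or> lt k mf"
          using maxk[OF nz(1)] by blast
        obtain mq where mq: "mq \<in> Poly_Mapping.keys q" "\<forall>k\<in>Poly_Mapping.keys q. k = mq \<or> lt k mq"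
          using maxk[OF nz(2)] by blast
        let ?a = "Poly_Mapping.lookup f mf" and ?b = "alpha_act \<alpha> mf (Poly_Mapping.lookup q mq)"
        have "?a * s * ?b = 0" for s
        proof -
          obtain r where r: "alpha_act \<alpha> mf r = s" using inv_ex by blast
          have "skew_mult \<alpha> (skew_mult \<alpha> f (Poly_Mapping.single 0 r)) q = 0"
            using h csub[OF T0] by blast
          then have "Poly_Mapping.lookup (skew_mult \<alpha> (skew_mult \<alpha> f (Poly_Mapping.single 0 r)) q) (mf + 0 + mq) = 0"
            by simp
          then show ?thesis using key[OF nz mf mq, of 0 r] r by simp
        qed
        then have "?a = 0 \<or> ?b = 0" using pr unfolding prime_ring_on_def by blast
        moreover have "?a \<noteq> 0" using mf(1) by (rule lookup_not_eq_zero_eq_in_keys[THEN iffD2])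
        moreover have "?b \<noteq> 0"
        proof
          assume "?b = 0"
          then have "?b = alpha_act \<alpha> mf 0" using act0 by simp
          then have "Poly_Mapping.lookup q mq = 0"
            by (rule injD[OF ring_aut_inj[OF alpha_act_aut]])
          then show False using mq(1) by (simp add: lookup_eq_zero_in_keys_contradict)
        qed
        ultimately show False by blast
      qed
    qed
  next
    assume sp: "semiprime_ring_on (UNIV :: 'a set) (*) 0"
    show "semiprime_ring_on (skew_sub T) (skew_mult \<alpha>) 0"
      unfolding semiprime_ring_on_def
    proof (intro ballI impI)
      fix f assume f: "f \<in> skew_sub T"
        and h: "\<forall>c\<in>skew_sub T. skew_mult \<alpha> (skew_mult \<alpha> f c) f = 0"
      show "f = 0"
      proof (rule ccontr)
        assume nz: "f \<noteq> 0"
        obtain mf where mf: "mf \<in> Poly_Mapping.keys f" "\<forall>k\<in>Poly_Mapping.keys f. k = mf \<or> lt k mf"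
          using maxk[OF nz] by blast
        have mfT: "mf \<in> T" using f mf(1) by (auto simp: skew_sub_def)
        let ?a = "Poly_Mapping.lookup f mf"
        define \<sigma> where "\<sigma> = alpha_act \<alpha> mf"
        have ht: "?a * s * alpha_act \<alpha> (mf + t) ?a = 0" if "t \<in> T" for s t
        proof -
          obtain r where r: "alpha_act \<alpha> mf r = s" using inv_ex by blast
          have "skew_mult \<alpha> (skew_mult \<alpha> f (Poly_Mapping.single t r)) f = 0"
            using h csub[OF that] by blast
          then have "Poly_Mapping.lookup (skew_mult \<alpha> (skew_mult \<alpha> f (Poly_Mapping.single t r)) f) (mf + t + mf) = 0"
            by simp
          then show ?thesis using key[OF nz nz mf mf, of t r] r by simp
        qed
        have pw: "\<exists>t\<in>T. alpha_act \<alpha> (mf + t) = \<sigma> ^^ Suc n" for n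
        proof (induction n)
          case 0
          show ?case by (rule bexI[of _ 0]) (simp_all add: T0 \<sigma>_def)
        next
          case (Suc n)
          then obtain t where t: "t \<in> T" "alpha_act \<alpha> (mf + t) = \<sigma> ^^ Suc n" by blast
          have "alpha_act \<alpha> (mf + (t + mf)) = alpha_act \<alpha> ((mf + t) + mf)" by (simp add: add.assoc)
          also have "\<dots> = \<sigma> ^^ Suc n \<circ> \<sigma>" using t(2) by (simp add: alpha_act_add \<sigma>_def)
          also have "\<dots> = \<sigma> ^^ Suc (Suc n)" by (simp only: funpow_Suc_right)
          finally show ?case using Tadd[OF t(1) mfT] by blast
        qed
        have "?a * s * (\<sigma> ^^ k) ?a = 0" if k1: "k \<ge> 1" for k s
        proof -
          obtain n where n: "k = Suc n" using k1 by (cases k) auto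
          obtain t where "t \<in> T" "alpha_act \<alpha> (mf + t) = \<sigma> ^^ Suc n" using pw by blast
          then show ?thesis using ht[of t s] n by simp
        qed
        note hk = this
        have "?a = 0"
        proof (rule semiprime_acc[OF acc sp])
          show "ring_aut \<sigma>" unfolding \<sigma>_def by (rule alpha_act_aut)
          show "?a * s * (\<sigma> ^^ k) ?a = 0" if "1 \<le> k" for k s using that by (rule hk)
        qed
        then show False using mf(1) by (simp add: lookup_eq_zero_in_keys_contradict)
      qed
    qed
  qed
qed


end
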